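(* Let $1 \leq n < \omega$, let $H$ be a set of ordinals, and let $\langle u_b \mid b \in [H]^n \rangle$ be a uniform $n$-dimensional $\Delta$-system, witnessed by an ordinal $\rho$ and sets $\langle \mathbf{r}_{\mathbf{m}} \mid \mathbf{m} \subseteq n \rangle$. Then: (1) for all $\mathbf{m} \subseteq n$ and all $a, b \in [H]^n$, if $a[\mathbf{m}] = b[\mathbf{m}]$, then $u_a[\mathbf{r}_{\mathbf{m}}] = u_b[\mathbf{r}_{\mathbf{m}}]$; (2) $\langle u_b \mid b \in [H]^n \rangle$ is an $n$-dimensional $\Delta$-system.
   Context: Natural numbers are von Neumann ordinals, so $n = \{0, \dots, n-1\}$. $[H]^k$ denotes the set of $k$-element subsets of $H$. For a set $u$ of ordinals, $\mathrm{otp}(u)$ is its order type; for $i < \mathrm{otp}(u)$, $u(i)$ is the unique $\alpha \in u$ with $\mathrm{otp}(u \cap \alpha) = i$; for $\mathbf{i} \subseteq \mathrm{otp}(u)$, $u[\mathbf{i}] := \{u(i) \mid i \in \mathbf{i}\}$. Sets of ordinals $a, b$ are aligned if $\mathrm{otp}(a) = \mathrm{otp}(b)$ and for every $\gamma \in a \cap b$, $\mathrm{otp}(a \cap \gamma) = \mathrm{otp}(b \cap \gamma)$. Let $\mathbf{r}(a,b) := \{ i < \mathrm{otp}(a) \mid a(i) \in b\}$. A family $\langle u_b \mid b \in [H]^n \rangle$ of sets of ordinals is a uniform $n$-dimensional $\Delta$-system, witnessed by an ordinal $\rho$ and sets $\mathbf{r}_{\mathbf{m}} \subseteq \rho$ ($\mathbf{m}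 \subseteq n$), if: (i) $\mathrm{otp}(u_b) = \rho$ for all $b \in [H]^n$; (ii) for all $a, b \in [H]^n$ and $\mathbf{m} \subseteq n$, if $a$ and $b$ are aligned with $\mathbf{r}(a,b) = \mathbf{m}$, then $u_a$ and $u_b$ are aligned with $\mathbf{r}(u_a, u_b) = \mathbf{r}_{\mathbf{m}}$; (iii) $\mathbf{r}_{\mathbf{m}_0 \cap \mathbf{m}_1} = \mathbf{r}_{\mathbf{m}_0} \cap \mathbf{r}_{\mathbf{m}_1}$ for all $\mathbf{m}_0, \mathbf{m}_1 \subseteq n$. A family of sets $\langle u_b \mid b \in [H]^n \rangle$ is an $n$-dimensional $\Delta$-system if there is a family of roots $\langle R^{\mathbf{m}}_a \mid \mathbf{m} \subseteq n,\ a \in [H]^{|\mathbf{m}|} \rangle$ such that for all $b, b' \in [H]^n$, if $b$ and $b'$ are aligned and $\mathbf{r}(b,b') = \mathbf{m}$, then $u_b \cap u_{b'} = R^{\mathbf{m}}_{b \cap b'}$. *)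

theory Defs
  imports Main
begin

text \<open>Ordinals are modelled by elements of a type of class wellorder; an ordinal
  index i (of some wellorder type) stands for the ordinal order type of {..<i}.
  Natural numbers are used for the finite ordinals n = {..<n}.\<close>

definition otp_eq :: "'a::linorder set \<Rightarrow> 'b::linorder set \<Rightarrow> bool" where
  "otp_eq A B \<longleftrightarrow> (\<exists>f. bij_betw f A B \<and> (\<forall>x\<in>A. \<forall>y\<in>A. x < y \<longrightarrow> f x < f y))"

definition elem :: "'c::wellorder set \<Rightarrow> 'o::wellorder \<Rightarrow> 'c" where
  "elem u i = (THE x. x \<in> u \<and> otp_eq (u \<inter> {..<x}) {..<i})"

definition aligned :: "'c::wellorder set \<Rightarrow> 'c set \<Rightarrow> bool" where
  "aligned a b \<longleftrightarrow> otp_eq a b \<and>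
     (\<forall>g \<in> a \<inter> b. otp_eq (a \<inter> {..<g}) (b \<inter> {..<g}))"

text \<open>r(a,b) = {i < otp(a) | a(i) \<in> b}, where ot is the order type of a.\<close>
definition rr :: "'o::wellorder \<Rightarrow> 'c::wellorder set \<Rightarrow> 'c set \<Rightarrow> 'o set" where
  "rr ot a b = {i. i < ot \<and> elem a i \<in> b}"

definition ksubsets :: "'a set \<Rightarrow> nat \<Rightarrow> 'a set set" where
  "ksubsets H k = {b. b \<subseteq> H \<and> finite b \<and> card b = k}"

definition uniform_delta_system ::
  "'a::wellorder set \<Rightarrow> nat \<Rightarrow> ('a set \<Rightarrow> 'c::wellorder set) \<Rightarrow> 'o::wellorder
     \<Rightarrow> (nat set \<Rightarrow> 'o set) \<Rightarrow> bool" where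
  "uniform_delta_system H n u rho R \<longleftrightarrow>
     (\<forall>m. m \<subseteq> {..<n} \<longrightarrow> R m \<subseteq> {..<rho}) \<and>
     (\<forall>b \<in> ksubsets H n. otp_eq (u b) {..<rho}) \<and>
     (\<forall>a \<in> ksubsets H n. \<forall>b \<in> ksubsets H n. \<forall>m. m \<subseteq> {..<n} \<longrightarrow>
        aligned a b \<longrightarrow> rr n a b = m \<longrightarrow>
        aligned (u a) (u b) \<and> rr rho (u a) (u b) = R m) \<and>
     (\<forall>m0 m1. m0 \<subseteq> {..<n} \<longrightarrow> m1 \<subseteq> {..<n} \<longrightarrow> R (m0 \<inter> m1) = R m0 \<inter> R m1)"

definition delta_system ::
  "'a::wellorder set \<Rightarrow> nat \<Rightarrow> ('a set \<Rightarrow> 'c set) \<Rightarrow> bool" where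
  "delta_system H n u \<longleftrightarrow>
     (\<exists>Root :: nat set \<Rightarrow> 'a set \<Rightarrow> 'c set.
        \<forall>b \<in> ksubsets H n. \<forall>b' \<in> ksubsets H n. \<forall>m. m \<subseteq> {..<n} \<longrightarrow>
          aligned b b' \<longrightarrow> rr n b b' = m \<longrightarrow> u b \<inter> u b' = Root m (b \<inter> b'))"

end

theory Submission
  imports Defs
begin

lemma smono_self_ge:
  fixes A :: "'c::wellorder set"
  assumes "f ` A \<subseteq> A" "\<forall>x\<in>A. \<forall>y\<in>A. x < y \<longrightarrow> f x < f y"
  shows "x \<in> A \<Longrightarrow> x \<le> f x"
proof (induction x rule: less_induct)
  case (less x)
  show ?case
  proof (rule ccontr)
    assume "\<not> x \<le> f x"
    hence lt: "f x < x" by simp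
    have fx: "f x \<in> A" using assms(1) less.prems by blast
    have "f (f x) < f x" using assms(2) lt fx less.prems by blast
    moreover have "f x \<le> f (f x)" using less.IH[OF lt fx] .
    ultimately show False by simp
  qed
qed

lemma otp_eq_sym:
  fixes A :: "'a::linorder set" and B :: "'b::linorder set"
  assumes "otp_eq A B" shows "otp_eq B A"
proof -
  obtain f where f: "bij_betw f A B" "\<forall>x\<in>A. \<forall>y\<in>A. x < y \<longrightarrow> f x < f y"
    using assms unfolding otp_eq_def by blast
  define g where "g = the_inv_into A f"
  have g: "bij_betw g B A" using f(1) unfolding g_def by (simp add: bij_betw_the_inv_into)
  have "\<forall>x\<in>B. \<forall>y\<in>B. x < y \<longrightarrow> g x < g y"
  proof (intro ballI impI)
    fix x y assume xy: "x \<in> B" "y \<in> B" "x < y"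
    have gx: "g x \<in> A" "f (g x) = x" using xy f(1) g unfolding g_def
      by (auto simp: bij_betw_def f_the_inv_into_f the_inv_into_into)
    have gy: "g y \<in> A" "f (g y) = y" using xy f(1) g unfolding g_def
      by (auto simp: bij_betw_def f_the_inv_into_f the_inv_into_into)
    show "g x < g y"
    proof (rule ccontr)
      assume "\<not> g x < g y"
      hence "g y < g x \<or> g y = g x" by auto
      thus False using f(2) gx gy xy(3) by (metis less_asym)
    qed
  qed
  thus ?thesis using g unfolding otp_eq_def by blast
qed

lemma otp_eq_trans:
  fixes A :: "'a::linorder set" and B :: "'b::linorder set" and C :: "'d::linorder set"
  assumes "otp_eq A B" "otp_eq B C" shows "otp_eq A C"
proof -
  obtain f where f: "bij_betw f A B" "\<forall>x\<in>A. \<forall>y\<in>A. x < y \<longrightarrow> f x < f y"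
    using assms unfolding otp_eq_def by blast
  obtain g where g: "bij_betw g B C" "\<forall>x\<in>B. \<forall>y\<in>B. x < y \<longrightarrow> g x < g y"
    using assms unfolding otp_eq_def by blast
  have "bij_betw (g \<circ> f) A C" using f g bij_betw_trans by blast
  moreover have "\<forall>x\<in>A. \<forall>y\<in>A. x < y \<longrightarrow> (g \<circ> f) x < (g \<circ> f) y"
    using f g by (auto simp: bij_betw_def)
  ultimately show ?thesis unfolding otp_eq_def by blast
qed

lemma elem_unique_aux:
  fixes c :: "'c::wellorder set" and i :: "'o::wellorder"
  assumes "x \<in> c" "y \<in> c" "otp_eq (c \<inter> {..<x}) {..<i}" "otp_eq (c \<inter> {..<y}) {..<i}" "x < y"
  shows False
proof -
  have "otp_eq (c \<inter> {..<y}) (c \<inter> {..<x})"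
    using assms(3,4) otp_eq_sym otp_eq_trans by blast
  then obtain g where g: "bij_betw g (c \<inter> {..<y}) (c \<inter> {..<x})"
    "\<forall>p\<in>c \<inter> {..<y}. \<forall>q\<in>c \<inter> {..<y}. p < q \<longrightarrow> g p < g q"
    unfolding otp_eq_def by blast
  have sub: "g ` (c \<inter> {..<y}) \<subseteq> c \<inter> {..<y}" using g(1) assms(5) by (auto simp: bij_betw_def)
  have xin: "x \<in> c \<inter> {..<y}" using assms by auto
  have "x \<le> g x" using smono_self_ge[OF sub g(2) xin] .
  moreover have "g x \<in> c \<inter> {..<x}" using g(1) xin by (auto simp: bij_betw_def)
  ultimately show False by auto
qed

lemma elem_eqI:
  fixes c :: "'c::wellorder set" and i :: "'o::wellorder"
  assumes "x \<in> c" "otp_eq (c \<inter> {..<x}) {..<i}"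
  shows "elem c i = x"
  unfolding elem_def
proof (rule the_equality)
  show "x \<in> c \<and> otp_eq (c \<inter> {..<x}) {..<i}" using assms by blast
next
  fix y assume "y \<in> c \<and> otp_eq (c \<inter> {..<y}) {..<i}"
  thus "y = x" using elem_unique_aux[of x c y i] elem_unique_aux[of y c x i] assms
    by (metis linorder_neqE)
qed

lemma otp_iso_restrict:
  fixes A :: "'c::wellorder set" and rho :: "'o::wellorder"
  assumes "bij_betw f A {..<rho}" "\<forall>x\<in>A. \<forall>y\<in>A. x < y \<longrightarrow> f x < f y" "x \<in> A"
  shows "elem A (f x) = x"
proof (rule elem_eqI[OF assms(3)])
  have "bij_betw f (A \<inter> {..<x}) {..<f x}"
    unfolding bij_betw_def
  proof
    show "inj_on f (A \<inter> {..<x})" using assms(1) by (auto simp: bij_betw_def intro: inj_on_subset)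
    show "f ` (A \<inter> {..<x}) = {..<f x}"
    proof
      show "f ` (A \<inter> {..<x}) \<subseteq> {..<f x}" using assms(2,3) by auto
      show "{..<f x} \<subseteq> f ` (A \<inter> {..<x})"
      proof
        fix j assume j: "j \<in> {..<f x}"
        have "f x < rho" using assms(1,3) by (auto simp: bij_betw_def)
        hence "j \<in> {..<rho}" using j by auto
        then obtain y where y: "y \<in> A" "f y = j" using assms(1) unfolding bij_betw_def by (metis imageE)
        have "y < x"
        proof (rule ccontr)
          assume "\<not> y < x" hence "x \<le> y" by simp
          hence "f x \<le> f y" using assms(2,3) y(1) by (metis le_less)
          thus False using y j by auto
        qed
        thus "j \<in> f ` (A \<inter> {..<x})" using y by auto
      qed
    qed
  qed
  thus "otp_eq (A \<inter> {..<x}) {..<f x}" unfolding otp_eq_def using assms(2) by blast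
qed

lemma otp_rho_elem:
  fixes A :: "'c::wellorder set" and rho :: "'o::wellorder"
  assumes "otp_eq A {..<rho}" "i < rho"
  shows "elem A i \<in> A \<and> otp_eq (A \<inter> {..<elem A i}) {..<i}"
proof -
  obtain f where f: "bij_betw f A {..<rho}" "\<forall>x\<in>A. \<forall>y\<in>A. x < y \<longrightarrow> f x < f y"
    using assms unfolding otp_eq_def by blast
  obtain x where x: "x \<in> A" "f x = i" using f(1) assms(2) unfolding bij_betw_def by (metis imageE lessThan_iff)
  have e: "elem A i = x" using otp_iso_restrict[OF f x(1)] x(2) by simp
  have "bij_betw f (A \<inter> {..<x}) {..<f x}"
    unfolding bij_betw_def
  proof
    show "inj_on f (A \<inter> {..<x})" using f(1) by (auto simp: bij_betw_def intro: inj_on_subset)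
    show "f ` (A \<inter> {..<x}) = {..<f x}"
    proof
      show "f ` (A \<inter> {..<x}) \<subseteq> {..<f x}" using f(2) x by auto
      show "{..<f x} \<subseteq> f ` (A \<inter> {..<x})"
      proof
        fix j assume j: "j \<in> {..<f x}"
        hence "j \<in> {..<rho}" using x assms(2) by auto
        then obtain y where y: "y \<in> A" "f y = j" using f(1) unfolding bij_betw_def by (metis imageE)
        have "y < x"
        proof (rule ccontr)
          assume "\<not> y < x" hence "x \<le> y" by simp
          hence "f x \<le> f y" using f(2) x(1) y(1) by (metis le_less)
          thus False using y j by auto
        qed
        thus "j \<in> f ` (A \<inter> {..<x})" using y by auto
      qed
    qed
  qed
  hence "otp_eq (A \<inter> {..<x}) {..<i}" unfolding otp_eq_def using f(2) x(2) by blast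
  thus ?thesis using e x by simp
qed

lemma otp_rho_all:
  fixes A :: "'c::wellorder set" and rho :: "'o::wellorder"
  assumes "otp_eq A {..<rho}" "x \<in> A"
  shows "\<exists>i<rho. elem A i = x"
proof -
  obtain f where f: "bij_betw f A {..<rho}" "\<forall>x\<in>A. \<forall>y\<in>A. x < y \<longrightarrow> f x < f y"
    using assms unfolding otp_eq_def by blast
  have "f x < rho" using f(1) assms(2) by (auto simp: bij_betw_def)
  thus ?thesis using otp_iso_restrict[OF f assms(2)] by blast
qed

lemma aligned_elem:
  fixes a c :: "'c::wellorder set" and i :: "'o::wellorder"
  assumes "aligned a c" "x \<in> a" "x \<in> c" "otp_eq (a \<inter> {..<x}) {..<i}"
  shows "elem c i = x"
proof -
  have "otp_eq (a \<inter> {..<x}) (c \<inter> {..<x})" using assms unfolding aligned_def by blast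
  hence "otp_eq (c \<inter> {..<x}) {..<i}" using assms(4) otp_eq_sym otp_eq_trans by blast
  thus ?thesis using elem_eqI assms(3) by blast
qed


lemma otp_eq_card:
  fixes B :: "'a::linorder set"
  assumes "finite B" shows "otp_eq B {..<card B}"
proof -
  define f where "f y = card (B \<inter> {..<y})" for y
  have mono: "\<forall>x\<in>B. \<forall>y\<in>B. x < y \<longrightarrow> f x < f y"
  proof (intro ballI impI)
    fix x y assume xy: "x \<in> B" "y \<in> B" "x < y"
    have "B \<inter> {..<x} \<subset> B \<inter> {..<y}" using xy by auto
    thus "f x < f y" unfolding f_def using assms by (simp add: psubset_card_mono)
  qed
  have inj: "inj_on f B"
  proof (rule inj_onI)
    fix x y assume "x \<in> B" "y \<in> B" "f x = f y"
    thus "x = y" using mono by (metis linorder_neqE less_irrefl)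
  qed
  have sub: "f ` B \<subseteq> {..<card B}"
  proof
    fix z assume "z \<in> f ` B"
    then obtain y where y: "y \<in> B" "z = f y" by blast
    have "B \<inter> {..<y} \<subset> B" using y by auto
    thus "z \<in> {..<card B}" unfolding y(2) f_def using assms by (simp add: psubset_card_mono)
  qed
  have "card (f ` B) = card B" using inj by (simp add: card_image)
  hence "f ` B = {..<card B}" using sub by (simp add: card_subset_eq)
  thus ?thesis unfolding otp_eq_def bij_betw_def using inj mono by blast
qed

lemma seq_otp:
  fixes g :: "nat \<Rightarrow> 'a::linorder"
  assumes "\<forall>i<n. \<forall>j<n. i < j \<longrightarrow> g i < g j" "k < n"
  shows "otp_eq (g ` {..<n} \<inter> {..<g k}) {..<k}"
proof -
  have eq: "g ` {..<n} \<inter> {..<g k} = g ` {..<k}"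
  proof
    show "g ` {..<n} \<inter> {..<g k} \<subseteq> g ` {..<k}"
    proof
      fix z assume "z \<in> g ` {..<n} \<inter> {..<g k}"
      then obtain i where i: "i < n" "z = g i" "g i < g k" by auto
      have "i < k"
      proof (rule ccontr)
        assume "\<not> i < k" hence "k \<le> i" by simp
        hence "g k \<le> g i" using assms i(1) by (metis le_less)
        thus False using i by auto
      qed
      thus "z \<in> g ` {..<k}" using i by auto
    qed
    show "g ` {..<k} \<subseteq> g ` {..<n} \<inter> {..<g k}" using assms by auto
  qed
  have inj: "inj_on g {..<k}"
  proof (rule inj_onI)
    fix x y assume "x \<in> {..<k}" "y \<in> {..<k}" "g x = g y"
    thus "x = y" using assms by (metis lessThan_iff less_trans linorder_neqE less_irrefl)
  qed
  have "card (g ` {..<k}) = k" using inj by (simp add: card_image)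
  thus "otp_eq (g ` {..<n} \<inter> {..<g k}) {..<k}" using eq otp_eq_card[of "g ` {..<k}"] by simp
qed

lemma elem_seq:
  fixes g :: "nat \<Rightarrow> 'a::wellorder"
  assumes "\<forall>i<n. \<forall>j<n. i < j \<longrightarrow> g i < g j" "k < n"
  shows "elem (g ` {..<n}) k = g k"
  using elem_eqI[OF _ seq_otp[OF assms]] assms(2) by auto

lemma ksub_seq:
  fixes a :: "'a::wellorder set"
  assumes "a \<in> ksubsets H n"
  shows "(\<forall>i<n. \<forall>j<n. i < j \<longrightarrow> elem a i < elem a j) \<and> a = elem a ` {..<n}"
proof -
  have fa: "finite a" "card a = n" using assms unfolding ksubsets_def by auto
  obtain l where l: "sorted_wrt (<) l" "set l = a" "length l = card a"
    by (metis fa(1) sorted_list_of_set.length_sorted_key_list_of_set sorted_list_of_set.set_sorted_key_list_of_set sorted_list_of_set.strict_sorted_key_list_of_set)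
  define g where "g i = l ! i" for i
  have mono: "\<forall>i<n. \<forall>j<n. i < j \<longrightarrow> g i < g j"
    using l fa unfolding g_def by (auto intro: sorted_wrt_nth_less)
  have aeq: "a = g ` {..<n}" using l fa unfolding g_def by (auto simp: set_conv_nth)
  have "\<forall>k<n. elem a k = g k" using elem_seq[OF mono] aeq by simp
  thus ?thesis using mono aeq by auto
qed

lemma img_eq_pointwise:
  fixes al be :: "nat \<Rightarrow> 'a::linorder"
  assumes "\<forall>i<n. \<forall>j<n. i < j \<longrightarrow> al i < al j" "\<forall>i<n. \<forall>j<n. i < j \<longrightarrow> be i < be j"
    "m \<subseteq> {..<n}" "al ` m = be ` m" "i \<in> m"
  shows "al i = be i"
proof -
  have fm: "finite m" using assms(3) finite_subset by blast
  have cnt: "card (g ` m \<inter> {..<g i}) = card (m \<inter> {..<i})"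
    if g: "\<forall>i<n. \<forall>j<n. i < j \<longrightarrow> g i < g j" for g :: "nat \<Rightarrow> 'a"
  proof -
    have "g ` m \<inter> {..<g i} = g ` (m \<inter> {..<i})"
    proof
      show "g ` m \<inter> {..<g i} \<subseteq> g ` (m \<inter> {..<i})"
      proof
        fix z assume "z \<in> g ` m \<inter> {..<g i}"
        then obtain k where k: "k \<in> m" "z = g k" "g k < g i" by auto
        have "k < i"
        proof (rule ccontr)
          assume "\<not> k < i" hence "i \<le> k" by simp
          hence "g i \<le> g k" using g k(1) assms(3,5) by (metis le_less lessThan_iff subsetD)
          thus False using k by auto
        qed
        thus "z \<in> g ` (m \<inter> {..<i})" using k by auto
      qed
      show "g ` (m \<inter> {..<i}) \<subseteq> g ` m \<inter> {..<g i}" using g assms(3,5) by auto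
    qed
    moreover have "inj_on g (m \<inter> {..<i})"
    proof (rule inj_onI)
      fix x y assume "x \<in> m \<inter> {..<i}" "y \<in> m \<inter> {..<i}" "g x = g y"
      thus "x = y" using g assms(3) by (metis IntD1 lessThan_iff subsetD linorder_neqE less_irrefl)
    qed
    ultimately show ?thesis by (simp add: card_image)
  qed
  have c1: "card (al ` m \<inter> {..<al i}) = card (al ` m \<inter> {..<be i})"
    using cnt[OF assms(1)] cnt[OF assms(2)] assms(4) by simp
  have fin: "finite (al ` m)" using fm by simp
  show ?thesis
  proof (rule ccontr)
    assume ne: "al i \<noteq> be i"
    have ai: "al i \<in> al ` m" "be i \<in> al ` m" using assms(4,5) by auto
    show False
    proof (cases "al i < be i")
      case True
      hence "al ` m \<inter> {..<al i} \<subset> al ` m \<inter> {..<be i}" using ai by auto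
      hence "card (al ` m \<inter> {..<al i}) < card (al ` m \<inter> {..<be i})"
        using fin by (simp add: psubset_card_mono)
      thus False using c1 by simp
    next
      case False
      hence "be i < al i" using ne by simp
      hence "al ` m \<inter> {..<be i} \<subset> al ` m \<inter> {..<al i}" using ai by auto
      hence "card (al ` m \<inter> {..<be i}) < card (al ` m \<inter> {..<al i})"
        using fin by (simp add: psubset_card_mono)
      thus False using c1 by simp
    qed
  qed
qed


lemma step_comb:
  fixes a b :: "'a::wellorder set"
  assumes a: "a \<in> ksubsets H n" and b: "b \<in> ksubsets H n" and j: "j < n"
    and lt: "elem a j < elem b j" and above: "\<forall>i. j < i \<and> i < n \<longrightarrow> elem a i = elem b i"
  shows "\<exists>c\<in>ksubsets H n. aligned a c \<and> {..<n} - {j} \<subseteq> rr n a c \<and>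
           (\<forall>i<n. elem c i = (if i = j then elem b j else elem a i))"
proof -
  define al :: "nat \<Rightarrow> 'a" where "al = elem a"
  define be :: "nat \<Rightarrow> 'a" where "be = elem b"
  have A: "\<forall>i<n. \<forall>k<n. i < k \<longrightarrow> al i < al k" "a = al ` {..<n}"
    using ksub_seq[OF a] unfolding al_def by auto
  have B: "\<forall>i<n. \<forall>k<n. i < k \<longrightarrow> be i < be k" "b = be ` {..<n}"
    using ksub_seq[OF b] unfolding be_def by auto
  define g where "g = al(j := be j)"
  have gm: "\<forall>i<n. \<forall>k<n. i < k \<longrightarrow> g i < g k"
  proof (intro allI impI)
    fix i k assume ik: "i < n" "k < n" "i < k"
    show "g i < g k"
    proof (cases "i = j")
      case True
      hence "k \<noteq> j" using ik by simp
      hence "g k = be k" using above ik True unfolding g_def al_def be_def by simp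
      thus ?thesis using True B(1) ik unfolding g_def by simp
    next
      case False
      show ?thesis
      proof (cases "k = j")
        case True
        have "al i < al j" using A(1) ik True by simp
        thus ?thesis using False True lt unfolding g_def al_def be_def by simp
      next
        case False
        thus ?thesis using \<open>i \<noteq> j\<close> A(1) ik unfolding g_def by simp
      qed
    qed
  qed
  define c where "c = g ` {..<n}"
  have ginj: "inj_on g {..<n}"
  proof (rule inj_onI)
    fix x y assume "x \<in> {..<n}" "y \<in> {..<n}" "g x = g y"
    thus "x = y" using gm by (metis lessThan_iff linorder_neqE less_irrefl)
  qed
  have Hs: "H \<supseteq> a" "H \<supseteq> b" using a b unfolding ksubsets_def by auto
  have cK: "c \<in> ksubsets H n"
  proof -
    have "c \<subseteq> H" unfolding c_def g_def using Hs A(2) B(2) j by auto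
    moreover have "card c = n" unfolding c_def using ginj by (simp add: card_image)
    ultimately show ?thesis unfolding ksubsets_def c_def by auto
  qed
  have ec: "\<forall>i<n. elem c i = g i" using elem_seq[OF gm] unfolding c_def by simp
  have bj_notin: "be j \<notin> a"
  proof
    assume "be j \<in> a"
    then obtain k where k: "k < n" "be j = al k" using A(2) by auto
    show False
    proof (cases "k \<le> j")
      case True
      hence "al k \<le> al j" using A(1) j k(1) by (metis le_less)
      thus False using k lt unfolding al_def be_def by simp
    next
      case False
      hence "al k = be k" using above k(1) unfolding al_def be_def by simp
      moreover have "be j < be k" using B(1) False j k(1) by simp
      ultimately show False using k by simp
    qed
  qed
  have fa: "finite a" "card a = n" using a unfolding ksubsets_def by auto
  have fc: "finite c" "card c = n" using cK unfolding ksubsets_def by auto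
  have al_al: "aligned a c"
    unfolding aligned_def
  proof
    show "otp_eq a c" using otp_eq_card[OF fa(1)] otp_eq_card[OF fc(1)] fa fc
        otp_eq_sym otp_eq_trans by metis
    show "\<forall>x\<in>a \<inter> c. otp_eq (a \<inter> {..<x}) (c \<inter> {..<x})"
    proof
      fix x assume x: "x \<in> a \<inter> c"
      then obtain k where k: "k < n" "x = al k" using A(2) by auto
      have kj: "k \<noteq> j"
      proof
        assume "k = j"
        then obtain i where i: "i < n" "g i = al j" using x k unfolding c_def by auto
        show False
        proof (cases "i = j")
          case True thus False using i lt unfolding g_def al_def be_def by simp
        next
          case False
          hence "al i = al j" using i unfolding g_def by simp
          thus False using A(1) False i(1) j by (metis linorder_neqE less_irrefl)
        qed
      qed
      have gk: "g k = x" using k kj unfolding g_def by simp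
      have "otp_eq (a \<inter> {..<x}) {..<k}" using seq_otp[OF A(1) k(1)] A(2) k by simp
      moreover have "otp_eq (c \<inter> {..<x}) {..<k}" using seq_otp[OF gm k(1)] gk unfolding c_def by simp
      ultimately show "otp_eq (a \<inter> {..<x}) (c \<inter> {..<x})" using otp_eq_sym otp_eq_trans by blast
    qed
  qed
  have rr: "{..<n} - {j} \<subseteq> rr n a c"
  proof
    fix i assume i: "i \<in> {..<n} - {j}"
    hence "g i = al i" unfolding g_def by simp
    hence "elem a i \<in> c" using i unfolding c_def al_def by force
    thus "i \<in> rr n a c" using i unfolding rr_def by simp
  qed
  show ?thesis using cK al_al rr ec unfolding g_def al_def be_def by auto
qed


lemma transfer:
  fixes H :: "'a::wellorder set" and u :: "'a set \<Rightarrow> 'c::wellorder set"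
    and rho :: "'o::wellorder" and R :: "nat set \<Rightarrow> 'o set"
  assumes U: "uniform_delta_system H n u rho R"
    and a: "a \<in> ksubsets H n" and c: "c \<in> ksubsets H n" and al: "aligned a c"
    and m: "m \<subseteq> rr n a c" and i: "i \<in> R m"
  shows "elem (u a) i = elem (u c) i"
proof -
  have U2: "\<forall>b \<in> ksubsets H n. otp_eq (u b) {..<rho}"
   and U3: "\<forall>a \<in> ksubsets H n. \<forall>b \<in> ksubsets H n. \<forall>m. m \<subseteq> {..<n} \<longrightarrow>
        aligned a b \<longrightarrow> rr n a b = m \<longrightarrow>
        aligned (u a) (u b) \<and> rr rho (u a) (u b) = R m"
   and U4: "\<forall>m0 m1. m0 \<subseteq> {..<n} \<longrightarrow> m1 \<subseteq> {..<n} \<longrightarrow> R (m0 \<inter> m1) = R m0 \<inter> R m1"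
    using U unfolding uniform_delta_system_def by auto
  define m' where "m' = rr n a c"
  have m'n: "m' \<subseteq> {..<n}" unfolding m'_def rr_def by auto
  have mn: "m \<subseteq> {..<n}" using m m'n unfolding m'_def by auto
  have U1: "aligned (u a) (u c) \<and> rr rho (u a) (u c) = R m'"
    using U3[rule_format, OF a c m'n al] unfolding m'_def by simp
  have "R (m \<inter> m') = R m \<inter> R m'" using U4[rule_format, OF mn m'n] .
  moreover have "m \<inter> m' = m" using m unfolding m'_def by auto
  ultimately have "i \<in> R m'" using i by auto
  hence ir: "i < rho" "elem (u a) i \<in> u c" using U1 unfolding rr_def by auto
  have "otp_eq (u a) {..<rho}" using U2 a by blast
  hence e: "elem (u a) i \<in> u a \<and> otp_eq (u a \<inter> {..<elem (u a) i}) {..<i}"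
    using otp_rho_elem ir(1) by blast
  have "elem (u c) i = elem (u a) i"
    using aligned_elem[of "u a" "u c" "elem (u a) i" i] U1 ir(2) e by blast
  thus ?thesis by simp
qed

lemma main_ind:
  fixes H :: "'a::wellorder set" and u :: "'a set \<Rightarrow> 'c::wellorder set"
    and rho :: "'o::wellorder" and R :: "nat set \<Rightarrow> 'o set"
  assumes U: "uniform_delta_system H n u rho R" and mn: "m \<subseteq> {..<n}"
  shows "\<forall>a b. a \<in> ksubsets H n \<and> b \<in> ksubsets H n \<and> (\<forall>i\<in>m. elem a i = elem b i)
     \<and> card {i. i < n \<and> elem a i \<noteq> elem b i} = k \<longrightarrow> (\<forall>i\<in>R m. elem (u a) i = elem (u b) i)"
proof (induction k rule: less_induct)
  case (less k)
  show ?case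
  proof (intro allI impI)
    fix a b assume h: "a \<in> ksubsets H n \<and> b \<in> ksubsets H n \<and> (\<forall>i\<in>m. elem a i = elem b i)
     \<and> card {i. i < n \<and> elem a i \<noteq> elem b i} = k"
    have a: "a \<in> ksubsets H n" and b: "b \<in> ksubsets H n" and ag: "\<forall>i\<in>m. elem a i = elem (b::'a set) i"
      and kk: "card {i. i < n \<and> elem a i \<noteq> elem b i} = k" using h by auto
    define D where "D = {i. i < n \<and> elem a i \<noteq> elem b i}"
    have fD: "finite D" unfolding D_def by simp
    show "\<forall>i\<in>R m. elem (u a) i = elem (u b) i"
    proof (cases "D = {}")
      case True
      hence pw: "\<forall>i<n. elem a i = elem b i" unfolding D_def by auto
      have "elem a ` {..<n} = elem b ` {..<n}" by (rule image_cong) (use pw in auto)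
      hence "a = b" using ksub_seq[OF a] ksub_seq[OF b] by simp
      thus ?thesis by simp
    next
      case False
      define j where "j = Max D"
      have jD: "j \<in> D" using False fD unfolding j_def by simp
      have jn: "j < n" and jne: "elem a j \<noteq> elem b j" using jD unfolding D_def by auto
      have above: "\<forall>i. j < i \<and> i < n \<longrightarrow> elem a i = elem b i"
      proof (intro allI impI)
        fix i assume ij: "j < i \<and> i < n"
        show "elem a i = elem b i"
        proof (rule ccontr)
          assume "elem a i \<noteq> elem b i"
          hence "i \<in> D" using ij unfolding D_def by simp
          hence "i \<le> j" using Max_ge[OF fD] unfolding j_def by simp
          thus False using ij by simp
        qed
      qed
      have jm: "j \<notin> m" using ag jne by auto
      have msub: "m \<subseteq> {..<n} - {j}" using mn jm by auto
      show ?thesis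
      proof (cases "elem a j < elem b j")
        case True
        obtain c where c: "c \<in> ksubsets H n" "aligned a c" "{..<n} - {j} \<subseteq> rr n a c"
          "\<forall>i<n. elem c i = (if i = j then elem b j else elem a i)"
          using step_comb[OF a b jn True above] by blast
        have Dc: "{i. i < n \<and> elem c i \<noteq> elem b i} = D - {j}" unfolding D_def using c(4) by (auto split: if_splits)
        have lt: "card (D - {j}) < k" using kk jD fD unfolding D_def[symmetric]
          by (metis card_Diff1_less)
        have cb: "\<forall>i\<in>m. elem c i = elem b i" using c(4) ag jm mn by auto
        have IH: "\<forall>i\<in>R m. elem (u c) i = elem (u b) i"
          using less.IH[OF lt, rule_format, of c b] c(1) b cb Dc by simp
        have "\<forall>i\<in>R m. elem (u a) i = elem (u c) i"
          using transfer[OF U a c(1) c(2)] msub c(3) by blast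
        thus ?thesis using IH by simp
      next
        case False
        hence lt2: "elem b j < elem a j" using jne by simp
        obtain c where c: "c \<in> ksubsets H n" "aligned b c" "{..<n} - {j} \<subseteq> rr n b c"
          "\<forall>i<n. elem c i = (if i = j then elem a j else elem b i)"
          using step_comb[OF b a jn lt2] above by auto
        have Dc: "{i. i < n \<and> elem c i \<noteq> elem a i} = D - {j}" unfolding D_def using c(4) by (auto split: if_splits)
        have lt: "card (D - {j}) < k" using kk jD fD unfolding D_def[symmetric]
          by (metis card_Diff1_less)
        have cb: "\<forall>i\<in>m. elem c i = elem a i" using c(4) ag jm mn by auto
        have IH: "\<forall>i\<in>R m. elem (u c) i = elem (u a) i"
          using less.IH[OF lt, rule_format, of c a] c(1) a cb Dc by simp
        have "\<forall>i\<in>R m. elem (u b) i = elem (u c) i"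
          using transfer[OF U b c(1) c(2)] msub c(3) by blast
        thus ?thesis using IH by simp
      qed
    qed
  qed
qed


theorem proposition2p6:
  fixes H :: "'a::wellorder set" and n :: nat
    and u :: "'a set \<Rightarrow> 'c::wellorder set"
    and rho :: "'o::wellorder" and R :: "nat set \<Rightarrow> 'o set"
  assumes "1 \<le> n"
    and "uniform_delta_system H n u rho R"
  shows "(\<forall>m. m \<subseteq> {..<n} \<longrightarrow> (\<forall>a \<in> ksubsets H n. \<forall>b \<in> ksubsets H n.
            elem a ` m = elem b ` m \<longrightarrow> elem (u a) ` R m = elem (u b) ` R m))
         \<and> delta_system H n u"
proof -
  note U = assms(2)
  have P1: "\<forall>m. m \<subseteq> {..<n} \<longrightarrow> (\<forall>a \<in> ksubsets H n. \<forall>b \<in> ksubsets H n.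
            elem a ` m = elem b ` m \<longrightarrow> elem (u a) ` R m = elem (u b) ` R m)"
  proof (intro allI impI ballI)
    fix m a b assume mn: "m \<subseteq> {..<n}" and a: "a \<in> ksubsets H n" and b: "b \<in> ksubsets H n"
      and eq: "elem a ` m = elem (b::'a set) ` m"
    have pw: "\<forall>i\<in>m. elem a i = elem b i"
      using img_eq_pointwise[of n "elem a" "elem b" m] ksub_seq[OF a] ksub_seq[OF b] mn eq by blast
    have "\<forall>i\<in>R m. elem (u a) i = elem (u b) i"
      using main_ind[OF U mn, rule_format, of a b] a b pw by blast
    thus "elem (u a) ` R m = elem (u b) ` R m" by (intro image_cong) auto
  qed
  have U2: "\<forall>b \<in> ksubsets H n. otp_eq (u b) {..<rho}"
   and U3: "\<forall>a \<in> ksubsets H n. \<forall>b \<in> ksubsets H n. \<forall>m. m \<subseteq> {..<n} \<longrightarrow>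
        aligned a b \<longrightarrow> rr n a b = m \<longrightarrow>
        aligned (u a) (u b) \<and> rr rho (u a) (u b) = R m"
    using U unfolding uniform_delta_system_def by auto
  define Root :: "nat set \<Rightarrow> 'a set \<Rightarrow> 'c set" where
    "Root m x = elem (u (SOME b. b \<in> ksubsets H n \<and> elem b ` m = x)) ` R m" for m x
  have "\<forall>b \<in> ksubsets H n. \<forall>b' \<in> ksubsets H n. \<forall>m. m \<subseteq> {..<n} \<longrightarrow>
          aligned b b' \<longrightarrow> rr n b b' = m \<longrightarrow> u b \<inter> u b' = Root m (b \<inter> b')"
  proof (intro ballI allI impI)
    fix b b' m assume b: "b \<in> ksubsets H n" and b': "b' \<in> ksubsets H n" and mn: "m \<subseteq> {..<n}"
      and al: "aligned b b'" and r: "rr n b b' = m"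
    have bseq: "b = elem b ` {..<n}" using ksub_seq[OF b] by blast
    have inter: "b \<inter> b' = elem b ` m"
    proof
      show "b \<inter> b' \<subseteq> elem b ` m"
      proof
        fix x assume x: "x \<in> b \<inter> b'"
        then obtain i where i: "i < n" "x = elem b i" using bseq by (metis IntD1 imageE lessThan_iff)
        hence "i \<in> m" using x r unfolding rr_def by auto
        thus "x \<in> elem b ` m" using i by auto
      qed
      show "elem b ` m \<subseteq> b \<inter> b'"
      proof
        fix x assume "x \<in> elem b ` m"
        then obtain i where i: "i \<in> m" "x = elem b i" by auto
        hence "i < n" "elem b i \<in> b'" using r unfolding rr_def by auto
        moreover have "elem b i \<in> b" using bseq \<open>i < n\<close> by (metis imageI lessThan_iff)
        ultimately show "x \<in> b \<inter> b'" using i by auto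
      qed
    qed
    have U1: "aligned (u b) (u b') \<and> rr rho (u b) (u b') = R m"
      using U3[rule_format, OF b b' mn al r] .
    have ot: "otp_eq (u b) {..<rho}" using U2 b by blast
    have uinter: "u b \<inter> u b' = elem (u b) ` R m"
    proof
      show "u b \<inter> u b' \<subseteq> elem (u b) ` R m"
      proof
        fix x assume x: "x \<in> u b \<inter> u b'"
        then obtain i where i: "i < rho" "elem (u b) i = x" using otp_rho_all[OF ot] by blast
        hence "i \<in> rr rho (u b) (u b')" using x unfolding rr_def by auto
        thus "x \<in> elem (u b) ` R m" using U1 i by auto
      qed
      show "elem (u b) ` R m \<subseteq> u b \<inter> u b'"
      proof
        fix x assume "x \<in> elem (u b) ` R m"
        then obtain i where i: "i \<in> R m" "x = elem (u b) i" by auto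
        hence "i \<in> rr rho (u b) (u b')" using U1 by simp
        hence "i < rho" "elem (u b) i \<in> u b'" unfolding rr_def by auto
        moreover have "elem (u b) i \<in> u b" using otp_rho_elem[OF ot \<open>i < rho\<close>] by blast
        ultimately show "x \<in> u b \<inter> u b'" using i by auto
      qed
    qed
    define b0 where "b0 = (SOME b0. b0 \<in> ksubsets H n \<and> elem b0 ` m = b \<inter> b')"
    have "\<exists>b0. b0 \<in> ksubsets H n \<and> elem b0 ` m = b \<inter> b'" using b inter by blast
    hence b0: "b0 \<in> ksubsets H n \<and> elem b0 ` m = b \<inter> b'" unfolding b0_def by (rule someI_ex)
    have "elem (u b0) ` R m = elem (u b) ` R m"
      using P1 mn b0 b inter by metis
    thus "u b \<inter> u b' = Root m (b \<inter> b')" unfolding Root_def b0_def[symmetric] using uinter by simp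
  qed
  hence "delta_system H n u" unfolding delta_system_def by blast
  with P1 show ?thesis by blast
qed

end
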